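(* Let $C$ be an $(n,n-b)$-code, let $d\in\{0,1,\dots,b\}$, and let $C'$ be any $(m,m-1)$ MDS code. The following are equivalent: (a) $C$ is $\operatorname{rMDS}^d(m)$; (b) $C'\otimes C$ is a $(1,b-d)$-relaxed $(m,n,1,b)$-MR tensor code.
   Context: An $(n,k)$-code is a $k$-dimensional subspace of $\mathbb F^n$ with a $k\times n$ generator matrix. For a $k\times n$ matrix $V$ and $A\subseteq[n]$, $V|_A$ is the submatrix of columns in $A$. For $A_1,\dots,A_\ell\subseteq[n]$, $\mathcal G_{A_1,\dots,A_\ell}[V]$ is the $\ell k\times(k+\sum|A_i|)$ block matrix whose $i$-th block row has $I_k$ in the first block column and $V|_{A_i}$ in block column $i+1$, zeros elsewhere. Sets are $V$-saturated if $\operatorname{rank}\mathcal G_{A_1,\dots,A_\ell}[V]=\ell k$, and have the $k$-dimensional saturation property if they are $W$-saturated for a generic $k\times n$ matrix $W$ (independent indeterminate entries). An $(n,k)$-code with generator matrix $G$ is $\operatorname{rMDS}^d(\ell)$ ($0\le d\le n-k$) if every family $A_1,\dots,A_\ell$ with the $(k+d)$-dimensional saturation property is $G$-saturated. Tensor codes: for an $(m,m-a)$-code $C_1$ and an $(n,n-b)$-code $C_2$, $C_1\otimes C_2$ is the code of $m\times n$ arrays whose columns lie in $C_1$ and rows in $C_2$. An erasure pattern $E\subseteq[m]\times[n]$ is correctable by a code if every codeword is determined by its entries outside $E$. $\mathcal E^{m,n}_{a,b}$ denotes the set of patterns correctable by an $(m,n,a,b)$-maximally recoverable tensor code over the relevant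 field characteristic, i.e. by $C_1\otimes C_2$ where $C_1,C_2$ have generic generator matrices of sizes $(m-a)\times m$ and $(n-b)\times n$. For $a'\le a$, $b'\le b$, $C_1\otimes C_2$ (with $C_1$ an $(m,m-a)$-code and $C_2$ an $(n,n-b)$-code) is an $(a',b')$-relaxed $(m,n,a,b)$-MR tensor code if it corrects every $E\in\mathcal E^{m,n}_{a',b'}$. *)

theory Defs
  imports "HOL-Library.Poly_Mapping" "HOL-Library.Product_Lexorder"
          "HOL-Computational_Algebra.Fraction_Field"
begin

(* Matrices are functions nat => nat => 'k, with explicit dimensions;
   entries outside the stated ranges are ignored. Vectors are nat => 'k. *)

definition full_row_rank :: "(nat \<Rightarrow> nat \<Rightarrow> 'k::field) \<Rightarrow> nat \<Rightarrow> nat \<Rightarrow> bool" where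
  "full_row_rank M r c \<longleftrightarrow>
     (\<forall>u. (\<forall>j<c. (\<Sum>i<r. u i * M i j) = 0) \<longrightarrow> (\<forall>i<r. u i = 0))"

definition restrict_cols :: "(nat \<Rightarrow> nat \<Rightarrow> 'k) \<Rightarrow> nat set \<Rightarrow> nat \<Rightarrow> nat \<Rightarrow> 'k" where
  "restrict_cols V A = (\<lambda>p q. V p (sorted_list_of_set A ! q))"

text \<open>The (l*k) x (k + sum |A_i|) block matrix G_{A_0,...,A_{l-1}}[V]:
  block row i has I_k in block column 0 and V|_{A_i} in block column i+1.\<close>
definition gblock :: "nat \<Rightarrow> (nat \<Rightarrow> nat \<Rightarrow> 'k::{zero,one}) \<Rightarrow> (nat \<Rightarrow> nat set) \<Rightarrow> nat \<Rightarrow> nat \<Rightarrow> 'k" where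
  "gblock k V A = (\<lambda>r c.
     (let i = r div k; p = r mod k in
      if c < k then (if c = p then 1 else 0)
      else (let c' = c - k; off = (\<Sum>t<i. card (A t)) in
            if off \<le> c' \<and> c' < off + card (A i)
            then restrict_cols V (A i) p (c' - off) else 0)))"

definition saturated :: "nat \<Rightarrow> (nat \<Rightarrow> nat \<Rightarrow> 'k::field) \<Rightarrow> (nat \<Rightarrow> nat set) \<Rightarrow> nat \<Rightarrow> bool" where
  "saturated k V A l \<longleftrightarrow> full_row_rank (gblock k V A) (l * k) (k + (\<Sum>i<l. card (A i)))"

text \<open>Generic matrices: entries are independent indeterminates X_(t,i,j) in the
  rational function field over the coefficient field 'a (t distinguishes
  different generic matrices).\<close>
type_synonym 'a gfield = "(((nat \<times> nat \<times> nat) \<Rightarrow>\<^sub>0 nat) \<Rightarrow>\<^sub>0 'a) fract"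

definition indet :: "nat \<Rightarrow> nat \<Rightarrow> nat \<Rightarrow> 'a::field gfield" where
  "indet t i j = Fract (Poly_Mapping.single (Poly_Mapping.single (t, i, j) (1::nat)) (1::'a)) 1"

definition generic :: "nat \<Rightarrow> nat \<Rightarrow> nat \<Rightarrow> 'a::field gfield" where
  "generic t = (\<lambda>i j. indet t i j)"

definition sat_property :: "'a::field itself \<Rightarrow> nat \<Rightarrow> (nat \<Rightarrow> nat set) \<Rightarrow> nat \<Rightarrow> bool" where
  "sat_property _ k A l \<longleftrightarrow> saturated k (generic 0 :: nat \<Rightarrow> nat \<Rightarrow> 'a gfield) A l"

definition is_code :: "(nat \<Rightarrow> nat \<Rightarrow> 'k::field) \<Rightarrow> nat \<Rightarrow> nat \<Rightarrow> bool" where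
  "is_code G n k \<longleftrightarrow> k \<le> n \<and> full_row_rank G k n"

definition is_MDS :: "(nat \<Rightarrow> nat \<Rightarrow> 'k::field) \<Rightarrow> nat \<Rightarrow> nat \<Rightarrow> bool" where
  "is_MDS G n k \<longleftrightarrow> is_code G n k \<and>
     (\<forall>S \<subseteq> {..<n}. card S = k \<longrightarrow> full_row_rank (restrict_cols G S) k k)"

definition rMDS :: "(nat \<Rightarrow> nat \<Rightarrow> 'a::field) \<Rightarrow> nat \<Rightarrow> nat \<Rightarrow> nat \<Rightarrow> nat \<Rightarrow> bool" where
  "rMDS G n k d l \<longleftrightarrow>
     (\<forall>A. (\<forall>i<l. A i \<subseteq> {..<n}) \<and> sat_property TYPE('a) (k + d) A l \<longrightarrow> saturated k G A l)"

definition in_code :: "(nat \<Rightarrow> nat \<Rightarrow> 'k::field) \<Rightarrow> nat \<Rightarrow> nat \<Rightarrow> (nat \<Rightarrow> 'k) \<Rightarrow> bool" where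
  "in_code G k n v \<longleftrightarrow> (\<exists>c. \<forall>j<n. v j = (\<Sum>i<k. c i * G i j))"

definition tensor_cw :: "(nat \<Rightarrow> nat \<Rightarrow> 'k::field) \<Rightarrow> nat \<Rightarrow> (nat \<Rightarrow> nat \<Rightarrow> 'k) \<Rightarrow> nat \<Rightarrow> nat \<Rightarrow> nat
    \<Rightarrow> (nat \<Rightarrow> nat \<Rightarrow> 'k) \<Rightarrow> bool" where
  "tensor_cw G1 k1 G2 k2 m n X \<longleftrightarrow>
     (\<forall>j<n. in_code G1 k1 m (\<lambda>i. X i j)) \<and> (\<forall>i<m. in_code G2 k2 n (\<lambda>j. X i j))"

definition correctable :: "(nat \<Rightarrow> nat \<Rightarrow> 'k::field) \<Rightarrow> nat \<Rightarrow> (nat \<Rightarrow> nat \<Rightarrow> 'k) \<Rightarrow> nat \<Rightarrow> nat \<Rightarrow> nat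
    \<Rightarrow> (nat \<times> nat) set \<Rightarrow> bool" where
  "correctable G1 k1 G2 k2 m n E \<longleftrightarrow>
     (\<forall>X Y. tensor_cw G1 k1 G2 k2 m n X \<and> tensor_cw G1 k1 G2 k2 m n Y \<and>
        (\<forall>i<m. \<forall>j<n. (i, j) \<notin> E \<longrightarrow> X i j = Y i j) \<longrightarrow> (\<forall>i<m. \<forall>j<n. X i j = Y i j))"

definition MR_patterns :: "'a::field itself \<Rightarrow> nat \<Rightarrow> nat \<Rightarrow> nat \<Rightarrow> nat \<Rightarrow> (nat \<times> nat) set set" where
  "MR_patterns _ m n a b = {E. E \<subseteq> {..<m} \<times> {..<n} \<and>
     correctable (generic 0 :: nat \<Rightarrow> nat \<Rightarrow> 'a gfield) (m - a) (generic 1) (n - b) m n E}"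

definition relaxed_MR :: "(nat \<Rightarrow> nat \<Rightarrow> 'a::field) \<Rightarrow> (nat \<Rightarrow> nat \<Rightarrow> 'a) \<Rightarrow> nat \<Rightarrow> nat \<Rightarrow> nat \<Rightarrow> nat
    \<Rightarrow> nat \<Rightarrow> nat \<Rightarrow> bool" where
  "relaxed_MR G1 G2 m n a b a' b' \<longleftrightarrow> a' \<le> a \<and> b' \<le> b \<and>
     (\<forall>E \<in> MR_patterns TYPE('a) m n a' b'. correctable G1 (m - a) G2 (n - b) m n E)"

end

theory Submission
  imports Defs "Jordan_Normal_Form.Determinant"
begin

type_synonym mono = "(nat \<times> nat \<times> nat) \<Rightarrow>\<^sub>0 nat"

definition swp :: "nat \<times> nat \<times> nat \<Rightarrow> nat \<times> nat \<times> nat" where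
  "swp = (\<lambda>(t,i,j). (if t = 0 then 1 else if t = 1 then 0 else t, i, j))"

lemma swp_swp[simp]: "swp (swp x) = x"
  by (cases x) (auto simp: swp_def)

lemma inj_swp: "inj swp"
  by (metis injI swp_swp)

definition muS :: "mono \<Rightarrow> mono" where
  "muS m = Poly_Mapping.map_key swp m"

lemma lookup_map_key: assumes "inj f" shows "Poly_Mapping.lookup (Poly_Mapping.map_key f p) k = Poly_Mapping.lookup p (f k)"
  using Poly_Mapping.map_key.rep_eq[OF assms, of p] by (metis comp_apply)

lemma lookup_muS: "Poly_Mapping.lookup (muS m) k = Poly_Mapping.lookup m (swp k)"
  unfolding muS_def by (rule lookup_map_key[OF inj_swp])

lemma muS_muS[simp]: "muS (muS m) = m"
  by (rule poly_mapping_eqI) (simp add: lookup_muS)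

lemma muS_add: "muS (a + b) = muS a + muS b"
  by (rule poly_mapping_eqI) (simp add: lookup_muS lookup_add)

lemma muS_0[simp]: "muS 0 = 0"
  by (rule poly_mapping_eqI) (simp add: lookup_muS)

lemma inj_muS: "inj muS"
  by (metis injI muS_muS)

lemma bij_muS: "bij muS"
  by (metis bij_betw_def inj_muS muS_muS surj_def)

lemma muS_single: "muS (Poly_Mapping.single (t,i,j) (c::nat)) = Poly_Mapping.single (if t = 0 then 1 else if t = 1 then 0 else t, i, j) c"
  by (rule poly_mapping_eqI) (auto simp: lookup_muS lookup_single when_def swp_def split: prod.splits)

definition tauS :: "(mono \<Rightarrow>\<^sub>0 'a::field) \<Rightarrow> (mono \<Rightarrow>\<^sub>0 'a)" where
  "tauS p = Poly_Mapping.map_key muS p"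

lemma lookup_tauS: "Poly_Mapping.lookup (tauS p) k = Poly_Mapping.lookup p (muS k)"
  unfolding tauS_def by (rule lookup_map_key[OF inj_muS])

lemma tauS_tauS[simp]: "tauS (tauS p) = p"
  by (rule poly_mapping_eqI) (simp add: lookup_tauS)

lemma tauS_add: "tauS (a + b) = tauS a + tauS b"
  by (rule poly_mapping_eqI) (simp add: lookup_tauS lookup_add)

lemma tauS_0[simp]: "tauS 0 = 0"
  by (rule poly_mapping_eqI) (simp add: lookup_tauS)

lemma tauS_1[simp]: "tauS 1 = 1"
proof (rule poly_mapping_eqI)
  fix k
  have "muS k = 0 \<longleftrightarrow> k = 0" by (metis muS_0 muS_muS)
  then show "Poly_Mapping.lookup (tauS 1) k = Poly_Mapping.lookup 1 k"
    by (simp add: lookup_tauS lookup_one)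
qed

lemma tauS_single: "tauS (Poly_Mapping.single M c) = Poly_Mapping.single (muS M) c"
  apply (rule poly_mapping_eqI)
  apply (auto simp: lookup_tauS lookup_single when_def)
  done

lemma tauS_mult: "tauS (a * b) = tauS a * tauS b"
proof (rule poly_mapping_eqI)
  fix k
  have "Poly_Mapping.lookup (tauS (a * b)) k = (Sum_any (\<lambda>l. Poly_Mapping.lookup a l * (Sum_any (\<lambda>q. Poly_Mapping.lookup b q when muS k = l + q))))"
    by (simp add: lookup_tauS lookup_mult)
  also have "\<dots> = (Sum_any (\<lambda>l. Poly_Mapping.lookup a (muS l) * (Sum_any (\<lambda>q. Poly_Mapping.lookup b q when muS k = muS l + q))))"
    by (rule Sum_any.reindex_cong[OF bij_muS]) (simp add: o_def)
  also have "\<dots> = (Sum_any (\<lambda>l. Poly_Mapping.lookup a (muS l) * (Sum_any (\<lambda>q. Poly_Mapping.lookup b (muS q) when k = l + q))))"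
  proof -
    have "\<And>l. (Sum_any (\<lambda>q. Poly_Mapping.lookup b q when muS k = muS l + q)) = (Sum_any (\<lambda>q. Poly_Mapping.lookup b (muS q) when k = l + q))"
    proof -
      fix l
      show "(Sum_any (\<lambda>q. Poly_Mapping.lookup b q when muS k = muS l + q)) = (Sum_any (\<lambda>q. Poly_Mapping.lookup b (muS q) when k = l + q))"
      proof (rule Sum_any.reindex_cong[OF bij_muS], rule ext)
        fix q
        have "muS k = muS l + muS q \<longleftrightarrow> k = l + q"
          by (metis muS_add muS_muS)
        then show "((\<lambda>q. Poly_Mapping.lookup b q when muS k = muS l + q) \<circ> muS) q = (Poly_Mapping.lookup b (muS q) when k = l + q)"
          by simp
      qed
    qed
    then show ?thesis by simp
  qed
  also have "\<dots> = Poly_Mapping.lookup (tauS a * tauS b) k"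
    by (simp add: lookup_tauS lookup_mult)
  finally show "Poly_Mapping.lookup (tauS (a * b)) k = Poly_Mapping.lookup (tauS a * tauS b) k" .
qed

lemma tauS_nz: "b \<noteq> 0 \<Longrightarrow> tauS b \<noteq> 0"
  by (metis tauS_0 tauS_tauS)

definition sigS :: "'a::field gfield \<Rightarrow> 'a gfield" where
  "sigS x = (SOME y. \<exists>a b. b \<noteq> 0 \<and> x = Fraction_Field.Fract a b \<and> y = Fraction_Field.Fract (tauS a) (tauS b))"

lemma sigS_Fract: assumes "b \<noteq> 0" shows "sigS (Fraction_Field.Fract a b) = Fraction_Field.Fract (tauS a) (tauS b)"
proof -
  have ex: "\<exists>y a' b'. b' \<noteq> 0 \<and> Fraction_Field.Fract a b = Fraction_Field.Fract a' b' \<and> y = Fraction_Field.Fract (tauS a') (tauS b')"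
    using assms by blast
  then obtain a' b' where ab: "b' \<noteq> 0" "Fraction_Field.Fract a b = Fraction_Field.Fract a' b'"
    and s: "sigS (Fraction_Field.Fract a b) = Fraction_Field.Fract (tauS a') (tauS b')"
    unfolding sigS_def by (smt (verit, ccfv_SIG) someI_ex)
  from ab assms have "a * b' = a' * b" by (simp add: eq_fract)
  then have "tauS a * tauS b' = tauS a' * tauS b" by (metis tauS_mult)
  moreover have "tauS b \<noteq> 0" "tauS b' \<noteq> 0" using ab assms tauS_nz by auto
  ultimately have "Fraction_Field.Fract (tauS a') (tauS b') = Fraction_Field.Fract (tauS a) (tauS b)"
    by (simp add: eq_fract)
  then show ?thesis using s ab(2) by simp
qed

lemma sigS_add: "sigS (x + y) = sigS x + sigS y"
proof -
  obtain a b where x: "x = Fraction_Field.Fract a b" "b \<noteq> 0" by (cases x) auto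
  obtain c d where y: "y = Fraction_Field.Fract c d" "d \<noteq> 0" by (cases y) auto
  show ?thesis using x y by (simp add: sigS_Fract tauS_nz tauS_add tauS_mult)
qed

lemma sigS_mult: "sigS (x * y) = sigS x * sigS y"
proof -
  obtain a b where x: "x = Fraction_Field.Fract a b" "b \<noteq> 0" by (cases x) auto
  obtain c d where y: "y = Fraction_Field.Fract c d" "d \<noteq> 0" by (cases y) auto
  show ?thesis using x y by (simp add: sigS_Fract tauS_nz tauS_mult)
qed

lemma sigS_sigS: "sigS (sigS x) = x"
proof -
  obtain a b where x: "x = Fraction_Field.Fract a b" "b \<noteq> 0" by (cases x) auto
  show ?thesis using x by (simp add: sigS_Fract tauS_nz)
qed

lemma sigS_indet0: "sigS (indet 0 i j :: 'a::field gfield) = indet 1 i j"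
  by (simp add: indet_def sigS_Fract tauS_single muS_single)

lemma sigS_indet1: "sigS (indet 1 i j :: 'a::field gfield) = indet 0 i j"
  by (simp add: indet_def sigS_Fract tauS_single muS_single)

lemma inv_hom_0:
  fixes f :: "'k::field \<Rightarrow> 'k"
  assumes add: "\<And>x y. f (x + y) = f x + f y" shows "f 0 = 0"
proof -
  have "f 0 + f 0 = f 0 + 0" using add[of 0 0] by simp
  then show ?thesis by (rule add_left_imp_eq)
qed

lemma inv_hom_1:
  fixes f :: "'k::field \<Rightarrow> 'k"
  assumes add: "\<And>x y. f (x + y) = f x + f y" and mult: "\<And>x y. f (x * y) = f x * f y"
    and inv: "\<And>x. f (f x) = x"
  shows "f 1 = 1"
proof -
  have e: "f 1 * f 1 = f 1 * 1" using mult[of 1 1] by simp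
  have "f 1 \<noteq> 0" using inv[of 1] inv_hom_0[OF add] by force
  then show ?thesis using e by (rule mult_left_cancel[THEN iffD1])
qed

lemma sum_hom_gen:
  assumes add: "\<And>x y. f (x + y) = f x + f y" and z: "f 0 = 0"
  shows "f (sum g A) = sum (\<lambda>x. f (g x)) A"
proof (induction A rule: infinite_finite_induct)
  case (infinite A) then show ?case using z by simp
next
  case empty then show ?case using z by simp
next
  case (insert x F) then show ?case using add by simp
qed

lemma frr_hom:
  fixes f :: "'k::field \<Rightarrow> 'k"
  assumes add: "\<And>x y. f (x + y) = f x + f y" and mult: "\<And>x y. f (x * y) = f x * f y"
    and inv: "\<And>x. f (f x) = x"
    and M: "full_row_rank M r c"
  shows "full_row_rank (\<lambda>i j. f (M i j)) r c"
  unfolding full_row_rank_def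
proof (intro allI impI)
  fix u i
  assume h: "\<forall>j<c. (\<Sum>i<r. u i * f (M i j)) = 0" and i: "i < r"
  have z: "f 0 = 0" by (rule inv_hom_0[OF add])
  have "\<forall>j<c. (\<Sum>i<r. f (u i) * M i j) = 0"
  proof (intro allI impI)
    fix j assume "j < c"
    then have "f (\<Sum>i<r. u i * f (M i j)) = 0" using h z by simp
    moreover have "f (\<Sum>i<r. u i * f (M i j)) = (\<Sum>i<r. f (u i * f (M i j)))"
      by (rule sum_hom_gen[OF add z])
    moreover have "\<And>i. f (u i * f (M i j)) = f (u i) * M i j" by (simp only: mult inv)
    ultimately show "(\<Sum>i<r. f (u i) * M i j) = 0" by simp
  qed
  then have "f (u i) = 0" using M[unfolded full_row_rank_def, rule_format, of "\<lambda>i. f (u i)"] i by simp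
  then show "u i = 0" using inv[of "u i"] z by simp
qed

lemma gblock_hom:
  assumes z: "f 0 = 0" and o: "f 1 = 1"
  shows "gblock k (\<lambda>i j. f (V i j)) A = (\<lambda>r c. f (gblock k V A r c))"
  unfolding gblock_def restrict_cols_def Let_def by (intro ext) (simp add: if_distrib z o)

lemma saturated_hom:
  fixes f :: "'k::field \<Rightarrow> 'k"
  assumes add: "\<And>x y. f (x + y) = f x + f y" and mult: "\<And>x y. f (x * y) = f x * f y"
    and inv: "\<And>x. f (f x) = x"
    and S: "saturated k V A l"
  shows "saturated k (\<lambda>i j. f (V i j)) A l"
proof -
  have "full_row_rank (\<lambda>i j. f (gblock k V A i j)) (l * k) (k + (\<Sum>i<l. card (A i)))"
    by (rule frr_hom[OF add mult inv S[unfolded saturated_def]])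
  then show ?thesis
    unfolding saturated_def gblock_hom[OF inv_hom_0[OF add] inv_hom_1[OF add mult inv]] .
qed

lemma saturated_generic_swap:
  "saturated k (generic 0 :: nat \<Rightarrow> nat \<Rightarrow> 'a::field gfield) A l \<longleftrightarrow> saturated k (generic 1 :: nat \<Rightarrow> nat \<Rightarrow> 'a gfield) A l"
proof -
  have e1: "(\<lambda>i j. sigS (generic 0 i j :: 'a gfield)) = generic 1"
    by (intro ext) (simp add: generic_def sigS_indet0)
  have e2: "(\<lambda>i j. sigS (generic 1 i j :: 'a gfield)) = generic 0"
    by (intro ext) (simp only: generic_def sigS_indet1)
  have h1: "saturated k (generic 0 :: nat \<Rightarrow> nat \<Rightarrow> 'a gfield) A l \<Longrightarrow> saturated k (generic 1 :: nat \<Rightarrow> nat \<Rightarrow> 'a gfield) A l"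
  proof -
    assume h: "saturated k (generic 0 :: nat \<Rightarrow> nat \<Rightarrow> 'a gfield) A l"
    have "saturated k (\<lambda>i j. sigS (generic 0 i j :: 'a gfield)) A l"
      by (rule saturated_hom[OF sigS_add sigS_mult sigS_sigS h])
    then show ?thesis unfolding e1 .
  qed
  have h2: "saturated k (generic 1 :: nat \<Rightarrow> nat \<Rightarrow> 'a gfield) A l \<Longrightarrow> saturated k (generic 0 :: nat \<Rightarrow> nat \<Rightarrow> 'a gfield) A l"
  proof -
    assume h: "saturated k (generic 1 :: nat \<Rightarrow> nat \<Rightarrow> 'a gfield) A l"
    have "saturated k (\<lambda>i j. sigS (generic 1 i j :: 'a gfield)) A l"
      by (rule saturated_hom[OF sigS_add sigS_mult sigS_sigS h])
    then show ?thesis unfolding e2 .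
  qed
  show ?thesis using h1 h2 by blast
qed

definition satC :: "nat \<Rightarrow> (nat \<Rightarrow> nat \<Rightarrow> 'k::field) \<Rightarrow> (nat \<Rightarrow> nat set) \<Rightarrow> nat \<Rightarrow> bool" where
  "satC k V A l \<longleftrightarrow> (\<forall>w. ((\<forall>p<k. (\<Sum>i<l. w i p) = 0) \<and> (\<forall>i<l. \<forall>j\<in>A i. (\<Sum>p<k. w i p * V p j) = 0))
      \<longrightarrow> (\<forall>i<l. \<forall>p<k. w i p = 0))"

definition offs :: "(nat \<Rightarrow> nat set) \<Rightarrow> nat \<Rightarrow> nat" where
  "offs A i = (\<Sum>t<i. card (A t))"

lemma sum_split_add: "(\<Sum>r<a+(b::nat). (g r :: 'b::comm_monoid_add)) = (\<Sum>r<a. g r) + (\<Sum>p<b. g (a+p))"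
  by (induction b) (simp_all add: add.assoc)

lemma sum_blocks: "(\<Sum>r<l*(k::nat). (g r :: 'b::comm_monoid_add)) = (\<Sum>i<l. \<Sum>p<k. g (i*k+p))"
proof (induction l)
  case 0 then show ?case by simp
next
  case (Suc l)
  have "(\<Sum>r<Suc l*k. g r) = (\<Sum>r<l*k + k. g r)" by (simp add: add.commute)
  also have "\<dots> = (\<Sum>r<l*k. g r) + (\<Sum>p<k. g (l*k+p))" by (rule sum_split_add)
  finally show ?case using Suc by simp
qed

lemma gblock_entry:
  assumes "0 < k" "p < k"
  shows "gblock k V A (i*k+p) c = (if c < k then (if c = p then 1 else 0)
     else if offs A i \<le> c - k \<and> c - k < offs A i + card (A i)
          then V p (sorted_list_of_set (A i) ! (c - k - offs A i)) else 0)"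
proof -
  have "(i*k+p) div k = i" "(i*k+p) mod k = p" using assms by auto
  then show ?thesis unfolding gblock_def restrict_cols_def Let_def offs_def by simp
qed

lemma offs_Suc: "offs A (Suc i) = offs A i + card (A i)"
  by (simp add: offs_def)

lemma offs_mono: "i \<le> i' \<Longrightarrow> offs A i \<le> offs A i'"
  unfolding offs_def by (rule sum_mono2) auto

lemma offs_lt: "i < i' \<Longrightarrow> offs A i + card (A i) \<le> offs A i'"
  using offs_mono[of "Suc i" i' A] by (simp add: offs_Suc)

lemma offs_cover: "c < offs A l \<Longrightarrow> \<exists>i<l. offs A i \<le> c \<and> c < offs A i + card (A i)"
proof (induction l)
  case 0 then show ?case by (simp add: offs_def)
next
  case (Suc l)
  show ?case
  proof (cases "c < offs A l")
    case True then show ?thesis using Suc.IH by (meson less_SucI)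
  next
    case False then show ?thesis using Suc.prems by (auto simp: offs_Suc intro!: exI[of _ l])
  qed
qed

lemma col_lo:
  fixes V :: "nat \<Rightarrow> nat \<Rightarrow> 'k::field"
  assumes "0 < k" "c < k"
  shows "(\<Sum>r<l*k. u r * gblock k V A r c) = (\<Sum>i<l. u (i*k+c))"
proof -
  have "(\<Sum>r<l*k. u r * gblock k V A r c) = (\<Sum>i<l. \<Sum>p<k. u (i*k+p) * gblock k V A (i*k+p) c)"
    by (rule sum_blocks)
  also have "\<dots> = (\<Sum>i<l. u (i*k+c))"
  proof (rule sum.cong[OF refl])
    fix i
    have "(\<Sum>p<k. u (i*k+p) * gblock k V A (i*k+p) c) = (\<Sum>p<k. if c = p then u (i*k+p) else 0)"
      by (rule sum.cong[OF refl]) (simp add: gblock_entry assms)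
    also have "\<dots> = u (i*k+c)" using assms by (simp add: sum.delta)
    finally show "(\<Sum>p<k. u (i*k+p) * gblock k V A (i*k+p) c) = u (i*k+c)" .
  qed
  finally show ?thesis .
qed

lemma col_hi:
  fixes V :: "nat \<Rightarrow> nat \<Rightarrow> 'k::field"
  assumes "0 < k" "ii < l" "q < card (A ii)"
  shows "(\<Sum>r<l*k. u r * gblock k V A r (k + offs A ii + q))
       = (\<Sum>p<k. u (ii*k+p) * V p (sorted_list_of_set (A ii) ! q))"
proof -
  let ?c = "k + offs A ii + q"
  let ?X = "(\<Sum>p<k. u (ii*k+p) * V p (sorted_list_of_set (A ii) ! q))"
  have "(\<Sum>r<l*k. u r * gblock k V A r ?c) = (\<Sum>i<l. \<Sum>p<k. u (i*k+p) * gblock k V A (i*k+p) ?c)"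
    by (rule sum_blocks)
  also have "\<dots> = (\<Sum>i<l. if i = ii then ?X else 0)"
  proof (rule sum.cong[OF refl])
    fix i
    show "(\<Sum>p<k. u (i*k+p) * gblock k V A (i*k+p) ?c) = (if i = ii then ?X else 0)"
    proof (cases "i = ii")
      case True
      then show ?thesis using assms by (simp add: gblock_entry)
    next
      case False
      have "\<not> (offs A i \<le> offs A ii + q \<and> offs A ii + q < offs A i + card (A i))"
      proof (cases "i < ii")
        case True then show ?thesis using offs_lt[of i ii A] by auto
      next
        case f: False
        with False have "ii < i" by auto
        then show ?thesis using offs_lt[of ii i A] assms by auto
      qed
      then have "\<forall>p<k. gblock k V A (i*k+p) (k + offs A ii + q) = 0"
        using False assms by (auto simp: gblock_entry)
      then show ?thesis using False by simp
    qed
  qed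
  also have "\<dots> = ?X" using assms by (simp add: sum.delta')
  finally show ?thesis .
qed

lemma sat_char:
  assumes fin: "\<forall>i<l. finite (A i)"
  shows "saturated k V A l \<longleftrightarrow> satC k V A l"
proof (cases "k = 0")
  case True
  then show ?thesis unfolding saturated_def satC_def full_row_rank_def by simp
next
  case False
  then have k: "0 < k" by simp
  have offl: "offs A i + card (A i) \<le> offs A l" if "i < l" for i
    using offs_mono[of "Suc i" l A] that by (simp add: offs_Suc)
  have S: "(\<Sum>i<l. card (A i)) = offs A l" by (simp add: offs_def)
  show ?thesis
  proof
    assume sat: "saturated k V A l"
    show "satC k V A l"
      unfolding satC_def
    proof (intro allI impI)
      fix w i p
      assume h: "(\<forall>p<k. (\<Sum>i<l. w i p) = 0) \<and> (\<forall>i<l. \<forall>j\<in>A i. (\<Sum>p<k. w i p * V p j) = 0)"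
        and i: "i < l" and p: "p < k"
      define u where "u r = w (r div k) (r mod k)" for r
      have u_eq: "u (i*k+p) = w i p" if "p < k" for i p using that k by (simp add: u_def)
      have cols: "\<forall>c<k + (\<Sum>i<l. card (A i)). (\<Sum>r<l*k. u r * gblock k V A r c) = 0"
      proof (intro allI impI)
        fix c assume c: "c < k + (\<Sum>i<l. card (A i))"
        show "(\<Sum>r<l*k. u r * gblock k V A r c) = 0"
        proof (cases "c < k")
          case True
          then show ?thesis using h k by (simp add: col_lo u_eq)
        next
          case False
          then have "c - k < offs A l" using c S by simp
          then obtain i0 where i0: "i0 < l" "offs A i0 \<le> c - k" "c - k < offs A i0 + card (A i0)"
            using offs_cover by blast
          define q where "q = c - k - offs A i0"
          have cq: "c = k + offs A i0 + q" using i0 False by (simp add: q_def)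
          have q: "q < card (A i0)" using i0 by (simp add: q_def)
          have "sorted_list_of_set (A i0) ! q \<in> A i0"
            using q fin i0(1) by (metis length_sorted_list_of_set nth_mem set_sorted_list_of_set)
          note mem = this
          have "(\<Sum>r<l*k. u r * gblock k V A r c) = (\<Sum>p<k. u (i0*k+p) * V p (sorted_list_of_set (A i0) ! q))"
            unfolding cq by (rule col_hi[where A=A and ii=i0 and l=l and q=q and k=k, OF k i0(1) q])
          also have "\<dots> = (\<Sum>p<k. w i0 p * V p (sorted_list_of_set (A i0) ! q))"
            by (rule sum.cong[OF refl]) (simp add: u_eq)
          also have "\<dots> = 0" using h i0(1) mem by blast
          finally show ?thesis .
        qed
      qed
      have "\<forall>r<l*k. u r = 0"
        using sat[unfolded saturated_def full_row_rank_def, rule_format, of u] cols by blast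
      moreover have "i*k+p < l*k"
      proof -
        have "i*k+p < i*k + k" using p by simp
        also have "\<dots> = Suc i * k" by simp
        also have "\<dots> \<le> l*k" using i by (intro mult_right_mono) auto
        finally show ?thesis .
      qed
      ultimately have "u (i*k+p) = 0" by blast
      then show "w i p = 0" using u_eq[OF p, of i] by simp
    qed
  next
    assume sc: "satC k V A l"
    show "saturated k V A l"
      unfolding saturated_def full_row_rank_def
    proof (intro allI impI)
      fix u r
      assume cols: "\<forall>c<k + (\<Sum>i<l. card (A i)). (\<Sum>r<l*k. u r * gblock k V A r c) = 0"
        and r: "r < l*k"
      define w where "w i p = u (i*k+p)" for i p
      have h1: "\<forall>p<k. (\<Sum>i<l. w i p) = 0"
      proof (intro allI impI)
        fix p assume p: "p < k"
        then have "(\<Sum>r<l*k. u r * gblock k V A r p) = 0" using cols by simp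
        then show "(\<Sum>i<l. w i p) = 0" using col_lo[where l=l and u=u and V=V and A=A, OF k p] by (simp add: w_def)
      qed
      have h2: "\<forall>i<l. \<forall>j\<in>A i. (\<Sum>p<k. w i p * V p j) = 0"
      proof (intro allI impI ballI)
        fix i j assume i: "i < l" and j: "j \<in> A i"
        then obtain q where q: "q < card (A i)" "sorted_list_of_set (A i) ! q = j"
          using fin by (metis in_set_conv_nth length_sorted_list_of_set set_sorted_list_of_set)
        have "k + offs A i + q < k + (\<Sum>i<l. card (A i))" using offl[OF i] q S by simp
        then have "(\<Sum>r<l*k. u r * gblock k V A r (k + offs A i + q)) = 0" using cols by blast
        then show "(\<Sum>p<k. w i p * V p j) = 0" using col_hi[where A=A and ii=i and l=l and q=q and k=k and u=u and V=V, OF k i q(1)] q(2) by (simp add: w_def)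
      qed
      have "\<forall>i<l. \<forall>p<k. w i p = 0" using sc[unfolded satC_def, rule_format, of w] h1 h2 by blast
      moreover have "r div k < l" using r k by (simp add: less_mult_imp_div_less)
      moreover have "r mod k < k" using k by simp
      moreover have "u r = w (r div k) (r mod k)" by (simp add: w_def)
      ultimately show "u r = 0" by simp
    qed
  qed
qed

definition hypH1 :: "(nat \<Rightarrow> nat \<Rightarrow> 'k::field) \<Rightarrow> nat \<Rightarrow> nat \<Rightarrow> (nat \<Rightarrow> 'k) \<Rightarrow> bool" where
  "hypH1 G1 k1 m lam \<longleftrightarrow> (\<forall>x. in_code G1 k1 m x \<longrightarrow> (\<Sum>i<m. lam i * x i) = 0)"

definition hypH2 :: "(nat \<Rightarrow> nat \<Rightarrow> 'k::field) \<Rightarrow> nat \<Rightarrow> nat \<Rightarrow> (nat \<Rightarrow> 'k) \<Rightarrow> bool" where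
  "hypH2 G1 k1 m lam \<longleftrightarrow> (\<forall>x. (\<Sum>i<m. lam i * x i) = 0 \<longrightarrow> in_code G1 k1 m x)"

lemma corr1:
  fixes G1 G2 :: "nat \<Rightarrow> nat \<Rightarrow> 'k::field"
  assumes m: "1 \<le> m" and lam: "\<forall>i<m. lam i \<noteq> 0" and H1: "hypH1 G1 k1 m lam"
    and sc: "satC k2 G2 (\<lambda>i. {j. j < n \<and> (i, j) \<notin> E}) m"
  shows "correctable G1 k1 G2 k2 m n E"
  unfolding correctable_def
proof (rule allI, rule allI, rule impI)
  fix X Y
  assume a: "tensor_cw G1 k1 G2 k2 m n X \<and> tensor_cw G1 k1 G2 k2 m n Y \<and>
        (\<forall>i<m. \<forall>j<n. (i, j) \<notin> E \<longrightarrow> X i j = Y i j)"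
  have "\<forall>i<m. in_code G2 k2 n (\<lambda>j. X i j)" using a unfolding tensor_cw_def by simp
  then have "\<forall>i. \<exists>c. i < m \<longrightarrow> (\<forall>j<n. X i j = (\<Sum>p<k2. c p * G2 p j))"
    unfolding in_code_def by auto
  then have "\<exists>f. \<forall>i. i < m \<longrightarrow> (\<forall>j<n. X i j = (\<Sum>p<k2. f i p * G2 p j))" by (rule choice)
  then obtain cX where cX0: "\<forall>i. i < m \<longrightarrow> (\<forall>j<n. X i j = (\<Sum>p<k2. cX i p * G2 p j))"
    by (elim exE)
  have cX: "\<And>i j. i < m \<Longrightarrow> j < n \<Longrightarrow> X i j = (\<Sum>p<k2. cX i p * G2 p j)"
    using cX0 by simp
  have "\<forall>i<m. in_code G2 k2 n (\<lambda>j. Y i j)" using a unfolding tensor_cw_def by simp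
  then have "\<forall>i. \<exists>c. i < m \<longrightarrow> (\<forall>j<n. Y i j = (\<Sum>p<k2. c p * G2 p j))"
    unfolding in_code_def by auto
  then have "\<exists>f. \<forall>i. i < m \<longrightarrow> (\<forall>j<n. Y i j = (\<Sum>p<k2. f i p * G2 p j))" by (rule choice)
  then obtain cY where cY0: "\<forall>i. i < m \<longrightarrow> (\<forall>j<n. Y i j = (\<Sum>p<k2. cY i p * G2 p j))"
    by (elim exE)
  have cY: "\<And>i j. i < m \<Longrightarrow> j < n \<Longrightarrow> Y i j = (\<Sum>p<k2. cY i p * G2 p j)"
    using cY0 by simp
  define e where "e i p = cX i p - cY i p" for i p
  define z where "z i j = X i j - Y i j" for i j
  have z_e: "z i j = (\<Sum>p<k2. e i p * G2 p j)" if "i < m" "j < n" for i j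
    using cX[OF that] cY[OF that] by (simp add: z_def e_def sum_subtractf left_diff_distrib)
  have colz: "(\<Sum>i<m. lam i * z i j) = 0" if j: "j < n" for j
  proof -
    have "in_code G1 k1 m (\<lambda>i. X i j)" "in_code G1 k1 m (\<lambda>i. Y i j)"
      using a j unfolding tensor_cw_def by auto
    then have "(\<Sum>i<m. lam i * X i j) = 0" "(\<Sum>i<m. lam i * Y i j) = 0"
      using H1 unfolding hypH1_def by auto
    then show ?thesis by (simp add: z_def right_diff_distrib sum_subtractf)
  qed
  define t where "t p = (\<Sum>i<m. lam i * e i p)" for p
  have tG: "(\<Sum>p<k2. t p * G2 p j) = 0" if j: "j < n" for j
  proof -
    have "(\<Sum>p<k2. t p * G2 p j) = (\<Sum>p<k2. \<Sum>i<m. lam i * e i p * G2 p j)"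
      by (simp add: t_def sum_distrib_right)
    also have "\<dots> = (\<Sum>i<m. \<Sum>p<k2. lam i * e i p * G2 p j)" by (rule sum.swap)
    also have "\<dots> = (\<Sum>i<m. lam i * z i j)"
      by (rule sum.cong[OF refl]) (simp add: z_e j sum_distrib_left mult.assoc)
    also have "\<dots> = 0" by (rule colz[OF j])
    finally show ?thesis .
  qed
  define w where "w i p = lam i * e i p - (if i = m - 1 then t p else 0)" for i p
  have h1: "\<forall>p<k2. (\<Sum>i<m. w i p) = 0"
  proof (intro allI impI)
    fix p
    have "(\<Sum>i<m. w i p) = t p - (\<Sum>i<m. if i = m - 1 then t p else 0)"
      by (simp add: w_def sum_subtractf t_def)
    also have "\<dots> = 0" using m by (simp add: sum.delta')
    finally show "(\<Sum>i<m. w i p) = 0" .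
  qed
  have h2: "\<forall>i<m. \<forall>j\<in>{j. j < n \<and> (i, j) \<notin> E}. (\<Sum>p<k2. w i p * G2 p j) = 0"
  proof (intro allI impI ballI)
    fix i j assume i: "i < m" and j: "j \<in> {j. j < n \<and> (i, j) \<notin> E}"
    then have jn: "j < n" and nE: "(i, j) \<notin> E" by auto
    have z0: "z i j = 0" using a i jn nE by (simp add: z_def)
    have "(\<Sum>p<k2. w i p * G2 p j) = lam i * (\<Sum>p<k2. e i p * G2 p j) - (if i = m - 1 then (\<Sum>p<k2. t p * G2 p j) else 0)"
      by (simp add: w_def left_diff_distrib sum_subtractf sum_distrib_left mult.assoc)
    also have "\<dots> = 0" using z0 z_e[OF i jn] tG[OF jn] by simp
    finally show "(\<Sum>p<k2. w i p * G2 p j) = 0" .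
  qed
  have w0: "\<forall>i<m. \<forall>p<k2. w i p = 0"
    using sc[unfolded satC_def, rule_format, of w] h1 h2 by blast
  show "\<forall>i<m. \<forall>j<n. X i j = Y i j"
  proof (intro allI impI)
    fix i j assume i: "i < m" and j: "j < n"
    have le: "lam i * e i p = (if i = m - 1 then t p else 0)" if "p < k2" for p
      using w0 i that by (simp add: w_def)
    have "lam i * z i j = (\<Sum>p<k2. lam i * e i p * G2 p j)"
      by (simp add: z_e[OF i j] sum_distrib_left mult.assoc)
    also have "\<dots> = (\<Sum>p<k2. (if i = m - 1 then t p else 0) * G2 p j)"
      by (rule sum.cong[OF refl]) (simp add: le)
    also have "\<dots> = (if i = m - 1 then (\<Sum>p<k2. t p * G2 p j) else 0)" by simp
    also have "\<dots> = 0" using tG[OF j] by simp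
    finally have "lam i * z i j = 0" .
    then have "z i j = 0" using lam i by simp
    then show "X i j = Y i j" by (simp add: z_def)
  qed
qed

lemma corr2:
  fixes G1 G2 :: "nat \<Rightarrow> nat \<Rightarrow> 'k::field"
  assumes lam: "\<forall>i<m. lam i \<noteq> 0" and H2: "hypH2 G1 k1 m lam"
    and frr: "full_row_rank G2 k2 n"
    and corr: "correctable G1 k1 G2 k2 m n E"
  shows "satC k2 G2 (\<lambda>i. {j. j < n \<and> (i, j) \<notin> E}) m"
  unfolding satC_def
proof (intro allI impI)
  fix w i p
  assume h: "(\<forall>p<k2. (\<Sum>i<m. w i p) = 0) \<and> (\<forall>i<m. \<forall>j\<in>{j. j < n \<and> (i, j) \<notin> E}. (\<Sum>p<k2. w i p * G2 p j) = 0)"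
    and i: "i < m" and p: "p < k2"
  define c where "c i p = w i p / lam i" for i p
  define X where "X i j = (\<Sum>p<k2. c i p * G2 p j)" for i j
  define Y :: "nat \<Rightarrow> nat \<Rightarrow> 'k" where "Y i j = 0" for i j
  have tX: "tensor_cw G1 k1 G2 k2 m n X"
    unfolding tensor_cw_def
  proof (intro conjI allI impI)
    fix j assume j: "j < n"
    have "(\<Sum>i<m. lam i * X i j) = (\<Sum>i<m. \<Sum>p<k2. w i p * G2 p j)"
    proof (rule sum.cong[OF refl])
      fix i assume "i \<in> {..<m}"
      then have "lam i \<noteq> 0" using lam by simp
      then show "lam i * X i j = (\<Sum>p<k2. w i p * G2 p j)"
        by (simp add: X_def c_def sum_distrib_left mult.assoc[symmetric])
    qed
    also have "\<dots> = (\<Sum>p<k2. (\<Sum>i<m. w i p) * G2 p j)"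
      by (simp add: sum.swap[of _ "{..<m}"] sum_distrib_right)
    also have "\<dots> = 0" using h by simp
    finally show "in_code G1 k1 m (\<lambda>i. X i j)" using H2[unfolded hypH2_def, rule_format, of "\<lambda>i. X i j"] by simp
  next
    fix i assume "i < m"
    show "in_code G2 k2 n (\<lambda>j. X i j)" unfolding in_code_def X_def by blast
  qed
  have tY: "tensor_cw G1 k1 G2 k2 m n Y"
    unfolding tensor_cw_def in_code_def Y_def by (auto intro!: exI[of _ "\<lambda>_. 0"])
  have agree: "\<forall>i<m. \<forall>j<n. (i, j) \<notin> E \<longrightarrow> X i j = Y i j"
  proof (intro allI impI)
    fix i j assume i: "i < m" and j: "j < n" and nE: "(i, j) \<notin> E"
    have "X i j = (\<Sum>p<k2. w i p * G2 p j) / lam i"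
      by (simp add: X_def c_def sum_divide_distrib)
    also have "\<dots> = 0" using h i j nE by simp
    finally show "X i j = Y i j" by (simp add: Y_def)
  qed
  have "\<forall>i<m. \<forall>j<n. X i j = Y i j"
    using corr[unfolded correctable_def, rule_format, of X Y] tX tY agree by blast
  then have "\<forall>j<n. (\<Sum>p<k2. c i p * G2 p j) = 0" using i by (simp add: X_def Y_def)
  then have "c i p = 0" using frr[unfolded full_row_rank_def, rule_format, of "c i"] p by blast
  then show "w i p = 0" using lam i by (simp add: c_def)
qed

definition matJ :: "(nat \<Rightarrow> nat \<Rightarrow> 'k) \<Rightarrow> nat \<Rightarrow> 'k mat" where
  "matJ M r = mat r r (\<lambda>(p,q). M p q)"

lemma matJ_carrier: "matJ M r \<in> carrier_mat r r" by (simp add: matJ_def)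

lemma dim_matJ[simp]: "dim_row (matJ M r) = r" "dim_col (matJ M r) = r" by (simp_all add: matJ_def)

lemma mult_matJ: fixes M :: "nat \<Rightarrow> nat \<Rightarrow> 'k::comm_ring_1"
  assumes "p < r" shows "(matJ M r *\<^sub>v vec r x) $ p = (\<Sum>q<r. M p q * x q)"
  using assms by (simp add: matJ_def scalar_prod_def lessThan_atLeast0)

lemma row_matJ[simp]: fixes M :: "nat \<Rightarrow> nat \<Rightarrow> 'k::comm_ring_1"
  assumes "p < r" shows "row (matJ M r) p \<bullet> vec r x = (\<Sum>q<r. M p q * x q)"
  using mult_matJ[OF assms, of M x] assms by simp

lemma matJ_transpose: "transpose_mat (matJ M r) = matJ (\<lambda>p q. M q p) r"
  by (rule eq_matI) (auto simp: matJ_def)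

lemma det_matJ_transpose: fixes M :: "nat \<Rightarrow> nat \<Rightarrow> 'k::comm_ring_1"
  shows "det (matJ (\<lambda>p q. M q p) r) = det (matJ M r)"
  using det_transpose[OF matJ_carrier[of M r]] by (simp add: matJ_transpose)

lemma sq_ker:
  fixes M :: "nat \<Rightarrow> nat \<Rightarrow> 'k::field"
  assumes d: "det (matJ M r) \<noteq> 0"
  shows "\<forall>x. (\<forall>p<r. (\<Sum>q<r. M p q * x q) = 0) \<longrightarrow> (\<forall>q<r. x q = 0)"
proof (intro allI impI)
  fix x q assume h: "\<forall>p<r. (\<Sum>q<r. M p q * x q) = 0" and q: "q < r"
  show "x q = 0"
  proof (rule ccontr)
    assume nz: "x q \<noteq> 0"
    let ?v = "vec r x"
    have "?v \<in> carrier_vec r" by simp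
    moreover have "?v \<noteq> 0\<^sub>v r"
    proof
      assume "?v = 0\<^sub>v r"
      then have "?v $ q = 0\<^sub>v r $ q" by simp
      then show False using q nz by simp
    qed
    moreover have "matJ M r *\<^sub>v ?v = 0\<^sub>v r"
      by (rule eq_vecI) (simp_all add: mult_matJ h)
    ultimately have "\<exists>v. v \<in> carrier_vec r \<and> v \<noteq> 0\<^sub>v r \<and> matJ M r *\<^sub>v v = 0\<^sub>v r"
      by blast
    then have "det (matJ M r) = 0"
      by (subst det_0_iff_vec_prod_zero_field[OF matJ_carrier])
    then show False using d by simp
  qed
qed

lemma sq_surj:
  fixes M :: "nat \<Rightarrow> nat \<Rightarrow> 'k::field"
  assumes d: "det (matJ M r) \<noteq> 0"
  shows "\<exists>x. \<forall>p<r. (\<Sum>q<r. M p q * x q) = y p"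
proof -
  have "matJ M r \<in> Units (ring_mat TYPE('k) r ())"
    by (rule det_non_zero_imp_unit[OF matJ_carrier d])
  then obtain B where B: "B \<in> carrier_mat r r" "matJ M r * B = 1\<^sub>m r"
    unfolding Units_def ring_mat_def by auto
  let ?x = "B *\<^sub>v vec r y"
  have "matJ M r *\<^sub>v ?x = (matJ M r * B) *\<^sub>v vec r y"
    by (rule assoc_mult_mat_vec[symmetric, OF matJ_carrier B(1)]) simp
  also have "\<dots> = vec r y" using B(2) by simp
  finally have "matJ M r *\<^sub>v ?x = vec r y" .
  moreover have "?x = vec r (\<lambda>q. ?x $ q)"
    by (rule eq_vecI) (use B in auto)
  ultimately have e: "matJ M r *\<^sub>v vec r (\<lambda>q. ?x $ q) = vec r y" by simp
  show ?thesis
  proof (intro exI allI impI)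
    fix p assume p: "p < r"
    have "(matJ M r *\<^sub>v vec r (\<lambda>q. ?x $ q)) $ p = vec r y $ p" using e by simp
    then show "(\<Sum>q<r. M p q * ?x $ q) = y p" using p by (simp add: mult_matJ)
  qed
qed

lemma frr_det:
  fixes M :: "nat \<Rightarrow> nat \<Rightarrow> 'k::field"
  shows "full_row_rank M r r \<longleftrightarrow> det (matJ M r) \<noteq> 0"
proof
  assume f: "full_row_rank M r r"
  show "det (matJ M r) \<noteq> 0"
  proof
    assume "det (matJ M r) = 0"
    then have "det (matJ (\<lambda>p q. M q p) r) = 0" by (rule trans[OF det_matJ_transpose])
    then have "\<exists>v. v \<in> carrier_vec r \<and> v \<noteq> 0\<^sub>v r \<and> matJ (\<lambda>p q. M q p) r *\<^sub>v v = 0\<^sub>v r"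
      by (subst det_0_iff_vec_prod_zero_field[OF matJ_carrier, symmetric])
    then obtain v where v: "v \<in> carrier_vec r" "v \<noteq> 0\<^sub>v r" "matJ (\<lambda>p q. M q p) r *\<^sub>v v = 0\<^sub>v r"
      by blast
    have vv: "v = vec r (\<lambda>i. v $ i)" by (rule eq_vecI) (use v in auto)
    have "\<forall>j<r. (\<Sum>i<r. v $ i * M i j) = 0"
    proof (intro allI impI)
      fix j assume j: "j < r"
      have "(matJ (\<lambda>p q. M q p) r *\<^sub>v vec r (\<lambda>i. v $ i)) $ j = 0" unfolding vv[symmetric] using v(3) j by simp
      then show "(\<Sum>i<r. v $ i * M i j) = 0" using j by (simp add: mult_matJ mult.commute)
    qed
    then have "\<forall>i<r. v $ i = 0" using f[unfolded full_row_rank_def, rule_format, of "\<lambda>i. v $ i"] by blast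
    then have "v = 0\<^sub>v r" using v(1) by (intro eq_vecI) auto
    then show False using v(2) by simp
  qed
next
  assume d: "det (matJ M r) \<noteq> 0"
  have "det (matJ (\<lambda>p q. M q p) r) \<noteq> 0" unfolding det_matJ_transpose[of M r] by (rule d)
  note K = sq_ker[OF this]
  show "full_row_rank M r r"
    unfolding full_row_rank_def
  proof (intro allI impI)
    fix u i assume h: "\<forall>j<r. (\<Sum>i<r. u i * M i j) = 0" and i: "i < r"
    have "\<forall>p<r. (\<Sum>q<r. M q p * u q) = 0"
    proof (intro allI impI)
      fix p assume "p < r"
      then have "(\<Sum>i<r. u i * M i p) = 0" using h by blast
      then show "(\<Sum>q<r. M q p * u q) = 0" by (simp add: mult.commute)
    qed
    then show "u i = 0" using K i by blast
  qed
qed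

lemma prod_single:
  assumes "finite I"
  shows "(\<Prod>i\<in>I. Poly_Mapping.single (f i) (1::'a::comm_ring_1)) = Poly_Mapping.single (\<Sum>i\<in>I. f i) 1"
  using assms by (induction I rule: finite_induct) (simp_all add: mult_single)

lemma signof_single:
  "(signof p :: ('b::comm_monoid_add \<Rightarrow>\<^sub>0 'a::comm_ring_1)) * Poly_Mapping.single M 1 = Poly_Mapping.single M (signof p)"
proof (cases p rule: sign_cases)
  case even then show ?thesis by simp
next
  case odd then show ?thesis by (simp add: single_uminus)
qed

lemma det_gen_poly:
  fixes v :: "nat \<Rightarrow> nat \<Rightarrow> nat \<times> nat \<times> nat"
  assumes inj: "\<And>p q p' q'. p < r \<Longrightarrow> q < r \<Longrightarrow> p' < r \<Longrightarrow> q' < r \<Longrightarrow> v p q = v p' q' \<Longrightarrow> p = p' \<and> q = q'"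
  shows "det (matJ (\<lambda>p q. Poly_Mapping.single (Poly_Mapping.single (v p q) (1::nat)) (1::'a::field)) r) \<noteq> 0"
proof -
  let ?X = "\<lambda>p q. Poly_Mapping.single (Poly_Mapping.single (v p q) (1::nat)) (1::'a)"
  let ?P = "{p. p permutes {0..<r}}"
  define mon where "mon \<pi> = (\<Sum>i\<in>{0..<r}. Poly_Mapping.single (v i (\<pi> i)) (1::nat))" for \<pi>
  have fP: "finite ?P" by (simp add: finite_permutations)
  have d: "det (matJ ?X r) = (\<Sum>\<pi>\<in>?P. Poly_Mapping.single (mon \<pi>) (signof \<pi>))"
  proof -
    have "det (matJ ?X r) = (\<Sum>\<pi>\<in>?P. signof \<pi> * (\<Prod>i = 0..<r. matJ ?X r $$ (i, \<pi> i)))"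
      by (rule det_def'[OF matJ_carrier])
    also have "\<dots> = (\<Sum>\<pi>\<in>?P. Poly_Mapping.single (mon \<pi>) (signof \<pi>))"
    proof (rule sum.cong[OF refl])
      fix \<pi> assume "\<pi> \<in> ?P"
      then have pi: "\<pi> permutes {0..<r}" by simp
      have "(\<Prod>i = 0..<r. matJ ?X r $$ (i, \<pi> i)) = (\<Prod>i = 0..<r. ?X i (\<pi> i))"
      proof (rule prod.cong[OF refl])
        fix i assume i: "i \<in> {0..<r}"
        then have "\<pi> i \<in> {0..<r}" using permutes_in_image[OF pi] by simp
        then show "matJ ?X r $$ (i, \<pi> i) = ?X i (\<pi> i)" using i by (simp add: matJ_def)
      qed
      also have "\<dots> = Poly_Mapping.single (mon \<pi>) 1" unfolding mon_def by (rule prod_single) simp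
      finally show "signof \<pi> * (\<Prod>i = 0..<r. matJ ?X r $$ (i, \<pi> i)) = Poly_Mapping.single (mon \<pi>) (signof \<pi>)"
        by (simp add: signof_single)
    qed
    finally show ?thesis .
  qed
  have mon_inj: "\<pi> = id" if pi: "\<pi> permutes {0..<r}" and e: "mon \<pi> = mon id" for \<pi>
  proof
    fix i
    show "\<pi> i = id i"
    proof (cases "i < r")
      case False
      then show ?thesis using pi by (simp add: permutes_def)
    next
      case True
      have pir: "\<pi> i < r" using permutes_in_image[OF pi] True by simp
      show ?thesis
      proof (rule ccontr)
        assume ne: "\<pi> i \<noteq> id i"
        let ?k = "v i (\<pi> i)"
        have "Poly_Mapping.lookup (mon \<pi>) ?k = (\<Sum>i'\<in>{0..<r}. if v i' (\<pi> i') = ?k then (1::nat) else 0)"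
          unfolding mon_def lookup_sum by (intro sum.cong) (auto simp: lookup_single when_def)
        also have "\<dots> \<ge> (if v i (\<pi> i) = ?k then 1 else 0)"
          by (rule member_le_sum) (use True in auto)
        finally have g: "Poly_Mapping.lookup (mon \<pi>) ?k \<ge> 1" by simp
        have "Poly_Mapping.lookup (mon id) ?k = (\<Sum>i'\<in>{0..<r}. if v i' i' = ?k then (1::nat) else 0)"
          unfolding mon_def lookup_sum by (intro sum.cong) (auto simp: lookup_single when_def)
        also have "\<dots> = 0"
        proof (rule sum.neutral, rule ballI)
          fix i' assume i': "i' \<in> {0..<r}"
          have "v i' i' \<noteq> ?k"
          proof
            assume "v i' i' = ?k"
            then have "i' = i \<and> i' = \<pi> i" using inj[of i' i' i "\<pi> i"] i' True pir by auto
            then show False using ne by simp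
          qed
          then show "(if v i' i' = ?k then 1 else 0) = (0::nat)" by simp
        qed
        finally show False using g e by simp
      qed
    qed
  qed
  have "Poly_Mapping.lookup (det (matJ ?X r)) (mon id) = (\<Sum>\<pi>\<in>?P. if \<pi> = id then signof \<pi> else 0)"
    unfolding d lookup_sum
  proof (rule sum.cong[OF refl])
    fix \<pi> assume "\<pi> \<in> ?P"
    then have pi: "\<pi> permutes {0..<r}" by simp
    show "Poly_Mapping.lookup (Poly_Mapping.single (mon \<pi>) (signof \<pi>)) (mon id) = (if \<pi> = id then signof \<pi> else (0::'a))"
      using mon_inj[OF pi] by (auto simp: lookup_single when_def)
  qed
  also have "\<dots> = signof id"
    using permutes_id[of "{0..<r}"] fP by (simp add: sum.delta')
  also have "\<dots> = (1::'a)" by simp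
  finally show ?thesis by auto
qed

lemma indet_to_fract: "indet t i j = to_fract (Poly_Mapping.single (Poly_Mapping.single (t, i, j) (1::nat)) (1::'a::field))"
  by (simp add: indet_def to_fract_def)

lemma det_restrict_generic:
  assumes fin: "finite S" and card: "card S = r"
  shows "det (matJ (restrict_cols (generic t :: nat \<Rightarrow> nat \<Rightarrow> 'a::field gfield) S) r) \<noteq> 0"
proof -
  let ?s = "sorted_list_of_set S"
  let ?X = "\<lambda>p q. Poly_Mapping.single (Poly_Mapping.single ((\<lambda>p q. (t, p, ?s ! q)) p q) (1::nat)) (1::'a)"
  interpret h: inj_comm_ring_hom "to_fract :: ((nat \<times> nat \<times> nat \<Rightarrow>\<^sub>0 nat) \<Rightarrow>\<^sub>0 'a) \<Rightarrow> _"
    by (unfold_locales) auto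
  have e: "matJ (restrict_cols (generic t :: nat \<Rightarrow> nat \<Rightarrow> 'a gfield) S) r = map_mat to_fract (matJ ?X r)"
    by (rule eq_matI) (auto simp: matJ_def restrict_cols_def generic_def indet_to_fract)
  have len: "length ?s = r" using fin card by simp
  have dist: "distinct ?s" by simp
  have "det (matJ ?X r) \<noteq> 0"
  proof (rule det_gen_poly)
    fix p q p' q' assume "p < r" "q < r" "p' < r" "q' < r" "(t, p, ?s ! q) = (t, p', ?s ! q')"
    then show "p = p' \<and> q = q'" using nth_eq_iff_index_eq[OF dist] len by auto
  qed
  then show ?thesis unfolding e h.hom_det by simp
qed

lemma frr_restrict_generic:
  assumes "finite S" "card S = r"
  shows "full_row_rank (restrict_cols (generic t :: nat \<Rightarrow> nat \<Rightarrow> 'a::field gfield) S) r r"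
  using det_restrict_generic[OF assms] by (simp add: frr_det)

lemma restrict_lessThan: "q < r \<Longrightarrow> restrict_cols W {..<r} p q = W p q"
  by (simp add: restrict_cols_def lessThan_atLeast0)

lemma frr_generic_rect:
  assumes "r \<le> n"
  shows "full_row_rank (generic t :: nat \<Rightarrow> nat \<Rightarrow> 'a::field gfield) r n"
  unfolding full_row_rank_def
proof (intro allI impI)
  fix u i assume h: "\<forall>j<n. (\<Sum>i<r. u i * (generic t :: nat \<Rightarrow> nat \<Rightarrow> 'a gfield) i j) = 0" and i: "i < r"
  have F: "full_row_rank (restrict_cols (generic t :: nat \<Rightarrow> nat \<Rightarrow> 'a gfield) {..<r}) r r"
    by (rule frr_restrict_generic) simp_all
  have "\<forall>j<r. (\<Sum>i<r. u i * restrict_cols (generic t :: nat \<Rightarrow> nat \<Rightarrow> 'a gfield) {..<r} i j) = 0"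
    using h assms by (simp add: restrict_lessThan)
  then show "u i = 0" using F[unfolded full_row_rank_def, rule_format, of u] i by blast
qed

lemma sum_sorted:
  assumes "finite S"
  shows "(\<Sum>q<card S. f (sorted_list_of_set S ! q)) = (\<Sum>j\<in>S. f j)"
proof -
  have "bij_betw ((!) (sorted_list_of_set S)) {..<card S} S"
    by (rule bij_betw_nth) (simp_all add: assms)
  then show ?thesis by (rule sum.reindex_bij_betw)
qed

lemma lam_exists:
  fixes W :: "nat \<Rightarrow> nat \<Rightarrow> 'k::field"
  assumes m: "1 \<le> m"
    and mds: "\<forall>S\<subseteq>{..<m}. card S = m - 1 \<longrightarrow> full_row_rank (restrict_cols W S) (m - 1) (m - 1)"
  shows "\<exists>lam. (\<forall>i<m. lam i \<noteq> 0) \<and> hypH1 W (m - 1) m lam \<and> hypH2 W (m - 1) m lam"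
proof -
  obtain r where mr: "m = Suc r" using m by (cases m) auto
  then have r: "m - 1 = r" by simp
  define M0 where "M0 = restrict_cols W {..<r}"
  have M0: "M0 p q = W p q" if "q < r" for p q using that by (simp add: M0_def restrict_lessThan)
  have "{..<r} \<subseteq> {..<m}" "card {..<r} = m - 1" using mr by auto
  then have "full_row_rank M0 r r" unfolding M0_def using mds[rule_format, of "{..<r}"] r by simp
  then have dM: "det (matJ M0 r) \<noteq> 0" by (simp add: frr_det)
  then have dMT: "det (matJ (\<lambda>p q. M0 q p) r) \<noteq> 0"
    unfolding det_matJ_transpose[of M0 r] .
  obtain mu where mu: "\<forall>p<r. (\<Sum>q<r. M0 p q * mu q) = W p r"
    using sq_surj[OF dM, of "\<lambda>p. W p r"] by blast
  have muW: "(\<Sum>q<r. W p q * mu q) = W p r" if p: "p < r" for p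
  proof -
    have "(\<Sum>q<r. W p q * mu q) = (\<Sum>q<r. M0 p q * mu q)"
      by (rule sum.cong[OF refl]) (simp add: M0)
    also have "\<dots> = W p r" using mu p by blast
    finally show ?thesis .
  qed
  define lam where "lam q = (if q < r then mu q else -1)" for q
  have lamsum: "(\<Sum>i<m. f i * lam i) = (\<Sum>i<r. f i * mu i) - f r" for f :: "nat \<Rightarrow> 'k"
  proof -
    have "(\<Sum>i<m. f i * lam i) = (\<Sum>i<r. f i * lam i) + f r * lam r"
      unfolding mr by (rule sum.lessThan_Suc)
    also have "(\<Sum>i<r. f i * lam i) = (\<Sum>i<r. f i * mu i)"
      by (rule sum.cong[OF refl]) (simp add: lam_def)
    also have "f r * lam r = - f r" by (simp add: lam_def)
    finally show ?thesis by simp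
  qed
  have Wlam: "(\<Sum>j<m. W p j * lam j) = 0" if "p < r" for p
    using lamsum[of "W p"] muW[OF that] by simp
  have H1: "hypH1 W (m - 1) m lam"
    unfolding hypH1_def in_code_def r
  proof (intro allI impI)
    fix x assume "\<exists>c. \<forall>j<m. x j = (\<Sum>i<r. c i * W i j)"
    then obtain c where c: "\<forall>j<m. x j = (\<Sum>i<r. c i * W i j)" by blast
    have "(\<Sum>i<m. lam i * x i) = (\<Sum>i<m. \<Sum>p<r. c p * (W p i * lam i))"
    proof (rule sum.cong[OF refl])
      fix i assume "i \<in> {..<m}"
      then have "x i = (\<Sum>p<r. c p * W p i)" using c by blast
      then show "lam i * x i = (\<Sum>p<r. c p * (W p i * lam i))"
        by (simp add: sum_distrib_left mult_ac)
    qed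
    also have "\<dots> = (\<Sum>p<r. \<Sum>i<m. c p * (W p i * lam i))" by (rule sum.swap)
    also have "\<dots> = (\<Sum>p<r. c p * (\<Sum>i<m. W p i * lam i))"
      by (simp add: sum_distrib_left)
    also have "\<dots> = 0" by (simp add: Wlam)
    finally show "(\<Sum>i<m. lam i * x i) = 0" .
  qed
  have H2: "hypH2 W (m - 1) m lam"
    unfolding hypH2_def in_code_def r
  proof (intro allI impI)
    fix x assume h: "(\<Sum>i<m. lam i * x i) = 0"
    have "(\<Sum>i<m. lam i * x i) = (\<Sum>i<m. x i * lam i)" by (simp add: mult.commute)
    then have xr: "x r = (\<Sum>i<r. x i * mu i)" using lamsum[of x] h by simp
    obtain c where c: "\<forall>q<r. (\<Sum>p<r. M0 p q * c p) = x q"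
      using sq_surj[OF dMT, of x] by blast
    have cW: "(\<Sum>p<r. c p * W p q) = x q" if q: "q < r" for q
    proof -
      have "(\<Sum>p<r. c p * W p q) = (\<Sum>p<r. M0 p q * c p)"
        by (rule sum.cong[OF refl]) (simp add: M0 q mult.commute)
      also have "\<dots> = x q" using c q by blast
      finally show ?thesis .
    qed
    show "\<exists>c. \<forall>j<m. x j = (\<Sum>i<r. c i * W i j)"
    proof (intro exI allI impI)
      fix j assume j: "j < m"
      show "x j = (\<Sum>i<r. c i * W i j)"
      proof (cases "j < r")
        case True then show ?thesis using cW by simp
      next
        case False
        then have jr: "j = r" using j mr by simp
        have "(\<Sum>p<r. c p * W p r) = (\<Sum>p<r. c p * (\<Sum>q<r. W p q * mu q))"
          by (rule sum.cong[OF refl]) (simp add: muW)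
        also have "\<dots> = (\<Sum>p<r. \<Sum>q<r. mu q * (c p * W p q))"
          by (simp add: sum_distrib_left mult_ac)
        also have "\<dots> = (\<Sum>q<r. \<Sum>p<r. mu q * (c p * W p q))" by (rule sum.swap)
        also have "\<dots> = (\<Sum>q<r. mu q * (\<Sum>p<r. c p * W p q))"
          by (simp add: sum_distrib_left)
        also have "\<dots> = (\<Sum>q<r. x q * mu q)"
          by (rule sum.cong[OF refl]) (simp add: cW mult.commute)
        finally show ?thesis using jr xr by simp
      qed
    qed
  qed
  have nz: "lam i \<noteq> 0" if i: "i < m" for i
  proof (cases "i < r")
    case False then show ?thesis by (simp add: lam_def)
  next
    case True
    show ?thesis
    proof
      assume l0: "lam i = 0"
      define S where "S = {..<m} - {i}"
      have fS: "finite S" by (simp add: S_def)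
      have cS: "card S = r" using i mr by (simp add: S_def)
      have "S \<subseteq> {..<m}" by (auto simp: S_def)
      then have "full_row_rank (restrict_cols W S) r r" using mds[rule_format, of S] cS r by simp
      then have dS: "det (matJ (restrict_cols W S) r) \<noteq> 0" by (simp add: frr_det)
      let ?s = "sorted_list_of_set S"
      have pre: "\<forall>p<r. (\<Sum>q<r. restrict_cols W S p q * lam (?s ! q)) = 0"
      proof (intro allI impI)
        fix p assume p: "p < r"
        have "(\<Sum>q<r. restrict_cols W S p q * lam (?s ! q)) = (\<Sum>q<card S. W p (?s ! q) * lam (?s ! q))"
          by (simp add: restrict_cols_def cS)
        also have "\<dots> = (\<Sum>j\<in>S. W p j * lam j)" by (rule sum_sorted[OF fS])
        also have "\<dots> = (\<Sum>j<m. W p j * lam j) - W p i * lam i"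
          unfolding S_def using i by (simp add: sum_diff1)
        also have "\<dots> = 0" using Wlam[OF p] l0 by simp
        finally show "(\<Sum>q<r. restrict_cols W S p q * lam (?s ! q)) = 0" .
      qed
      have ker: "\<forall>q<r. lam (?s ! q) = 0"
        using spec[OF sq_ker[OF dS], of "\<lambda>q. lam (?s ! q)"] pre by simp
      have "r \<in> S" using True mr by (simp add: S_def)
      then have "r \<in> set ?s" using fS by simp
      then obtain q where q: "q < length ?s" "?s ! q = r"
        by (auto simp: in_set_conv_nth)
      have "q < r" using q(1) fS cS by simp
      then have "lam (?s ! q) = 0" using ker by blast
      then have "lam r = 0" using q(2) by simp
      then show False by (simp add: lam_def)
    qed
  qed
  show ?thesis using nz H1 H2 by blast
qed

lemma satC_cong:
  assumes "\<And>i. i < l \<Longrightarrow> A i = B i"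
  shows "satC k V A l = satC k V B l"
proof -
  have "\<forall>w. (\<forall>i<l. \<forall>j\<in>A i. (\<Sum>p<k. w i p * V p j) = 0) = (\<forall>i<l. \<forall>j\<in>B i. (\<Sum>p<k. w i p * V p j) = 0)"
    using assms by auto
  then show ?thesis unfolding satC_def by simp
qed

theorem theorem3p15:
  fixes G :: "nat \<Rightarrow> nat \<Rightarrow> 'a::field" and G' :: "nat \<Rightarrow> nat \<Rightarrow> 'a"
    and n b d m :: nat
  assumes "b \<le> n" and "is_code G n (n - b)"
    and "d \<le> b"
    and "1 \<le> m" and "is_MDS G' m (m - 1)"
  shows "rMDS G n (n - b) d m \<longleftrightarrow> relaxed_MR G' G m n 1 b 1 (b - d)"
proof -
  note bn = assms(1) and code = assms(2) and db = assms(3) and m = assms(4) and mds = assms(5)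
  define k where "k = n - b"
  have kd: "n - (b - d) = k + d" using bn db by (simp add: k_def)
  have frrG: "full_row_rank G k n" using code by (simp add: is_code_def k_def)
  obtain lamG where lamG: "\<forall>i<m. lamG i \<noteq> 0" "hypH1 G' (m - 1) m lamG" "hypH2 G' (m - 1) m lamG"
    using lam_exists[OF m, of G'] mds unfolding is_MDS_def by auto
  have mdsW: "\<forall>S\<subseteq>{..<m}. card S = m - 1 \<longrightarrow> full_row_rank (restrict_cols (generic 0 :: nat \<Rightarrow> nat \<Rightarrow> 'a gfield) S) (m - 1) (m - 1)"
  proof (intro allI impI)
    fix S :: "nat set" assume "S \<subseteq> {..<m}" "card S = m - 1"
    moreover then have "finite S" using finite_subset by blast
    ultimately show "full_row_rank (restrict_cols (generic 0 :: nat \<Rightarrow> nat \<Rightarrow> 'a gfield) S) (m - 1) (m - 1)"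
      by (intro frr_restrict_generic) simp_all
  qed
  obtain lamW :: "nat \<Rightarrow> 'a gfield" where
    lamW: "\<forall>i<m. lamW i \<noteq> 0" "hypH1 (generic 0 :: nat \<Rightarrow> nat \<Rightarrow> 'a gfield) (m - 1) m lamW"
      "hypH2 (generic 0 :: nat \<Rightarrow> nat \<Rightarrow> 'a gfield) (m - 1) m lamW"
    using lam_exists[OF m mdsW] by blast
  have kdn: "k + d \<le> n" using bn db by (simp add: k_def)
  have frrW: "full_row_rank (generic 1 :: nat \<Rightarrow> nat \<Rightarrow> 'a gfield) (k + d) n"
    by (rule frr_generic_rect[OF kdn])
  show ?thesis
    unfolding k_def[symmetric]
  proof
    assume R: "rMDS G n k d m"
    show "relaxed_MR G' G m n 1 b 1 (b - d)"
      unfolding relaxed_MR_def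
    proof (intro conjI ballI)
      fix E assume "E \<in> MR_patterns TYPE('a) m n 1 (b - d)"
      then have Esub: "E \<subseteq> {..<m} \<times> {..<n}"
        and corrW: "correctable (generic 0 :: nat \<Rightarrow> nat \<Rightarrow> 'a gfield) (m - 1) (generic 1) (k + d) m n E"
        unfolding MR_patterns_def kd by auto
      let ?A = "\<lambda>i. {j. j < n \<and> (i, j) \<notin> E}"
      have fin: "\<forall>i<m. finite (?A i)" by simp
      have "satC (k + d) (generic 1 :: nat \<Rightarrow> nat \<Rightarrow> 'a gfield) ?A m"
        by (rule corr2[OF lamW(1) lamW(3) frrW corrW])
      then have "saturated (k + d) (generic 1 :: nat \<Rightarrow> nat \<Rightarrow> 'a gfield) ?A m"
        by (rule sat_char[OF fin, THEN iffD2])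
      then have "saturated (k + d) (generic 0 :: nat \<Rightarrow> nat \<Rightarrow> 'a gfield) ?A m"
        by (rule saturated_generic_swap[THEN iffD2])
      then have "sat_property TYPE('a) (k + d) ?A m" by (simp add: sat_property_def)
      moreover have "\<forall>i<m. ?A i \<subseteq> {..<n}" by auto
      ultimately have "saturated k G ?A m" using R[unfolded rMDS_def, rule_format, of ?A] by blast
      then have "satC k G ?A m" by (rule sat_char[OF fin, THEN iffD1])
      then have "correctable G' (m - 1) G k m n E"
        by (rule corr1[OF m lamG(1) lamG(2)])
      then show "correctable G' (m - 1) G (n - b) m n E" by (simp add: k_def)
    qed simp_all
  next
    assume Rel: "relaxed_MR G' G m n 1 b 1 (b - d)"
    show "rMDS G n k d m"
      unfolding rMDS_def
    proof (intro allI impI)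
      fix A assume h: "(\<forall>i<m. A i \<subseteq> {..<n}) \<and> sat_property TYPE('a) (k + d) A m"
      define E where "E = {(i, j). i < m \<and> j < n \<and> j \<notin> A i}"
      let ?A = "\<lambda>i. {j. j < n \<and> (i, j) \<notin> E}"
      have AA: "?A i = A i" if "i < m" for i using h that by (auto simp: E_def)
      have finA: "\<forall>i<m. finite (A i)" using h finite_subset by blast
      have fin: "\<forall>i<m. finite (?A i)" by simp
      have "saturated (k + d) (generic 0 :: nat \<Rightarrow> nat \<Rightarrow> 'a gfield) A m"
        using h by (simp add: sat_property_def)
      then have "saturated (k + d) (generic 1 :: nat \<Rightarrow> nat \<Rightarrow> 'a gfield) A m"
        by (rule saturated_generic_swap[THEN iffD1])
      then have "satC (k + d) (generic 1 :: nat \<Rightarrow> nat \<Rightarrow> 'a gfield) A m"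
        by (rule sat_char[OF finA, THEN iffD1])
      then have "satC (k + d) (generic 1 :: nat \<Rightarrow> nat \<Rightarrow> 'a gfield) ?A m"
      proof -
        have "satC (k + d) (generic 1 :: nat \<Rightarrow> nat \<Rightarrow> 'a gfield) ?A m = satC (k + d) (generic 1 :: nat \<Rightarrow> nat \<Rightarrow> 'a gfield) A m"
          by (rule satC_cong) (rule AA)
        then show ?thesis using \<open>satC (k + d) (generic 1 :: nat \<Rightarrow> nat \<Rightarrow> 'a gfield) A m\<close> by simp
      qed
      then have "correctable (generic 0 :: nat \<Rightarrow> nat \<Rightarrow> 'a gfield) (m - 1) (generic 1) (k + d) m n E"
        by (rule corr1[OF m lamW(1) lamW(2)])
      moreover have "E \<subseteq> {..<m} \<times> {..<n}" by (auto simp: E_def)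
      ultimately have "E \<in> MR_patterns TYPE('a) m n 1 (b - d)"
        unfolding MR_patterns_def kd by simp
      moreover have "\<forall>E\<in>MR_patterns TYPE('a) m n 1 (b - d). correctable G' (m - 1) G k m n E"
        using Rel unfolding relaxed_MR_def k_def by simp
      ultimately have "correctable G' (m - 1) G k m n E" by blast
      then have "satC k G ?A m"
        by (rule corr2[OF lamG(1) lamG(3) frrG])
      then have "satC k G A m"
      proof -
        have "satC k G ?A m = satC k G A m"
          by (rule satC_cong) (rule AA)
        then show ?thesis using \<open>satC k G ?A m\<close> by simp
      qed
      then show "saturated k G A m"
        by (rule sat_char[OF finA, THEN iffD2])
    qed
  qed
qed

end
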